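(* Let $V$ be a finite nonempty set and $f:\{0,1\}^V\to\{0,1\}^V$. Every subnetwork of $f$ (in particular $f$ itself) has exactly one fixed point if and only if $f$ has no even-self-dual and no odd-self-dual subnetwork.
   Context: For $x,y\in\{0,1\}^V$, $x\oplus y$ is componentwise addition mod 2, $1$ denotes the all-ones point, and $\|x\|$ is the number of components equal to $1$; $x$ is even (odd) if $\|x\|$ is even (odd). The conjugate of a network $g$ on $W$ is $\tilde g(x)=g(x)\oplus x$. For nonempty $I\subseteq V$ and $z\in\{0,1\}^{V\setminus I}$, the subnetwork of $f$ induced by $z$ is $h:\{0,1\}^I\to\{0,1\}^I$ with $h(x|_I)=f(x)|_I$ for all $x\in\{0,1\}^V$ whose restriction to $V\setminus I$ is $z$ ($f$ is a subnetwork of itself). A network $g$ on $W$ is self-dual if $g(x\oplus 1)=g(x)\oplus 1$ for all $x$; even (odd) if $\tilde g(\{0,1\}^W)$ is exactly the set of even (odd) points; even-self-dual (odd-self-dual) if both even (odd) and self-dual. *)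

theory Defs
  imports Main
begin

text \<open>Points of {0,1}^W are represented as boolean functions on 'v that are False outside W.\<close>
definition pts :: "'v set \<Rightarrow> ('v \<Rightarrow> bool) set" where
  "pts W = {x. \<forall>v. v \<notin> W \<longrightarrow> \<not> x v}"

definition bxor :: "('v \<Rightarrow> bool) \<Rightarrow> ('v \<Rightarrow> bool) \<Rightarrow> ('v \<Rightarrow> bool)" where
  "bxor x y = (\<lambda>v. x v \<noteq> y v)"

definition ones :: "'v set \<Rightarrow> ('v \<Rightarrow> bool)" where
  "ones W = (\<lambda>v. v \<in> W)"

definition weight :: "'v set \<Rightarrow> ('v \<Rightarrow> bool) \<Rightarrow> nat" where
  "weight W x = card {v \<in> W. x v}"

definition network :: "'v set \<Rightarrow> (('v \<Rightarrow> bool) \<Rightarrow> ('v \<Rightarrow> bool)) \<Rightarrow> bool" where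
  "network W g = (\<forall>x \<in> pts W. g x \<in> pts W)"

definition conjugate :: "(('v \<Rightarrow> bool) \<Rightarrow> ('v \<Rightarrow> bool)) \<Rightarrow> ('v \<Rightarrow> bool) \<Rightarrow> ('v \<Rightarrow> bool)" where
  "conjugate g x = bxor (g x) x"

text \<open>Subnetwork of f (on V) induced by z in {0,1}^(V-I): h(x|_I) = f(x)|_I where x|_(V-I) = z.\<close>
definition subnet :: "(('v \<Rightarrow> bool) \<Rightarrow> ('v \<Rightarrow> bool)) \<Rightarrow> 'v set \<Rightarrow> ('v \<Rightarrow> bool)
    \<Rightarrow> ('v \<Rightarrow> bool) \<Rightarrow> ('v \<Rightarrow> bool)" where
  "subnet f I z y = (\<lambda>v. v \<in> I \<and> f (\<lambda>u. if u \<in> I then y u else z u) v)"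

definition self_dual :: "'v set \<Rightarrow> (('v \<Rightarrow> bool) \<Rightarrow> ('v \<Rightarrow> bool)) \<Rightarrow> bool" where
  "self_dual W g = (\<forall>x \<in> pts W. g (bxor x (ones W)) = bxor (g x) (ones W))"

definition even_net :: "'v set \<Rightarrow> (('v \<Rightarrow> bool) \<Rightarrow> ('v \<Rightarrow> bool)) \<Rightarrow> bool" where
  "even_net W g = (conjugate g ` pts W = {x \<in> pts W. even (weight W x)})"

definition odd_net :: "'v set \<Rightarrow> (('v \<Rightarrow> bool) \<Rightarrow> ('v \<Rightarrow> bool)) \<Rightarrow> bool" where
  "odd_net W g = (conjugate g ` pts W = {x \<in> pts W. odd (weight W x)})"

definition even_self_dual :: "'v set \<Rightarrow> (('v \<Rightarrow> bool) \<Rightarrow> ('v \<Rightarrow> bool)) \<Rightarrow> bool" where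
  "even_self_dual W g = (even_net W g \<and> self_dual W g)"

definition odd_self_dual :: "'v set \<Rightarrow> (('v \<Rightarrow> bool) \<Rightarrow> ('v \<Rightarrow> bool)) \<Rightarrow> bool" where
  "odd_self_dual W g = (odd_net W g \<and> self_dual W g)"

end

theory Submission
  imports Defs
begin

lemma pts_finite: "finite I \<Longrightarrow> finite (pts I)"
proof -
  assume fI: "finite I"
  have "pts I \<subseteq> (\<lambda>S v. v \<in> S) ` Pow I"
  proof
    fix x assume "x \<in> pts I"
    then have "x = (\<lambda>v. v \<in> {v\<in>I. x v})" by (auto simp: pts_def fun_eq_iff)
    moreover have "{v\<in>I. x v} \<in> Pow I" by auto
    ultimately show "x \<in> (\<lambda>S v. v \<in> S) ` Pow I" by blast
  qed
  moreover have "finite ((\<lambda>S v. v \<in> S) ` Pow I)" using fI by simp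
  ultimately show ?thesis using finite_subset by blast
qed

lemma G_pts: "y \<in> pts I \<Longrightarrow> conjugate (subnet f I z) y \<in> pts I"
  by (auto simp: pts_def conjugate_def bxor_def subnet_def)

lemma G_restrict:
  assumes "i \<in> I" "v \<noteq> i"
  shows "conjugate (subnet f I z) y v
     = conjugate (subnet f (I - {i}) (z(i := y i))) (y(i := False)) v"
proof -
  have "(\<lambda>u. if u \<in> I - {i} then (y(i:=False)) u else (z(i := y i)) u)
      = (\<lambda>u. if u \<in> I then y u else z u)" using assms by (auto simp: fun_eq_iff)
  then show ?thesis using assms by (simp add: conjugate_def bxor_def subnet_def)
qed

lemma G_empty: "bij_betw (conjugate (subnet f {} z)) (pts {}) (pts {})"
proof -
  have "\<And>y. conjugate (subnet f {} z) y = y" by (simp add: conjugate_def bxor_def subnet_def fun_eq_iff)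
  then show ?thesis by (simp add: bij_betw_def inj_on_def)
qed

lemma step:
  fixes f :: "('v \<Rightarrow> bool) \<Rightarrow> ('v \<Rightarrow> bool)"
  assumes fin: "finite I" and ne: "I \<noteq> {}"
  and IH: "\<And>i b. i \<in> I \<Longrightarrow> bij_betw (conjugate (subnet f (I - {i}) (z(i := b)))) (pts (I - {i})) (pts (I - {i}))"
  and nb1: "\<not> even_self_dual I (subnet f I z)" and nb2: "\<not> odd_self_dual I (subnet f I z)"
  shows "bij_betw (conjugate (subnet f I z)) (pts I) (pts I)"
proof -
  define G where "G = conjugate (subnet f I z)"
  define N where "N T = card {y \<in> pts I. G y = T}" for T
  have finP: "finite (pts I)" using fin by (rule pts_finite)
  have Gp: "\<And>y. y \<in> pts I \<Longrightarrow> G y \<in> pts I" unfolding G_def by (rule G_pts)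
  have Gr: "\<And>y i v. i \<in> I \<Longrightarrow> v \<noteq> i \<Longrightarrow> G y v = conjugate (subnet f (I - {i}) (z(i := y i))) (y(i := False)) v"
    unfolding G_def by (rule G_restrict)
  have coll: "\<And>x x' i. x \<in> pts I \<Longrightarrow> x' \<in> pts I \<Longrightarrow> G x = G x' \<Longrightarrow> i \<in> I \<Longrightarrow> x i = x' i \<Longrightarrow> x = x'"
  proof -
    fix x x' i assume x: "x \<in> pts I" and x': "x' \<in> pts I" and eq: "G x = G x'" and i: "i \<in> I" and xi: "x i = x' i"
    let ?g = "conjugate (subnet f (I - {i}) (z(i := x i)))"
    have px: "x(i:=False) \<in> pts (I - {i})" using x by (auto simp: pts_def)
    have px': "x'(i:=False) \<in> pts (I - {i})" using x' by (auto simp: pts_def)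
    have "?g (x(i:=False)) = ?g (x'(i:=False))"
    proof
      fix v show "?g (x(i:=False)) v = ?g (x'(i:=False)) v"
      proof (cases "v = i")
        case True
        have "?g (x(i:=False)) \<in> pts (I-{i})" "?g (x'(i:=False)) \<in> pts (I-{i})" using G_pts px px' by blast+
        with True show ?thesis by (auto simp: pts_def)
      next
        case False
        show ?thesis using Gr[OF i False, of x] Gr[OF i False, of x'] eq xi by simp
      qed
    qed
    moreover have "inj_on ?g (pts (I - {i}))" using IH[OF i] bij_betw_def by blast
    ultimately have "x(i:=False) = x'(i:=False)" using px px' by (meson inj_onD)
    then show "x = x'"
    proof -
      assume e: "x(i:=False) = x'(i:=False)"
      show ?thesis
      proof
        fix v show "x v = x' v" using fun_cong[OF e, of v] xi by (cases "v = i") auto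
      qed
    qed
  qed
  have pair: "\<And>T i. T \<in> pts I \<Longrightarrow> i \<in> I \<Longrightarrow> N T + N (T(i := \<not> T i)) = 2"
  proof -
    fix T i assume T: "T \<in> pts I" and i: "i \<in> I"
    define S where "S = {y \<in> pts I. \<forall>v. v \<noteq> i \<longrightarrow> G y v = T v}"
    have spl: "S = {y \<in> pts I. G y = T} \<union> {y \<in> pts I. G y = T(i := \<not> T i)}"
    proof (rule set_eqI)
      fix y
      show "y \<in> S \<longleftrightarrow> y \<in> {y \<in> pts I. G y = T} \<union> {y \<in> pts I. G y = T(i := \<not> T i)}"
      proof
        assume yS: "y \<in> S"
        then have yp: "y \<in> pts I" and H: "\<And>v. v \<noteq> i \<Longrightarrow> G y v = T v" by (auto simp: S_def)
        show "y \<in> {y \<in> pts I. G y = T} \<union> {y \<in> pts I. G y = T(i := \<not> T i)}"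
        proof (cases "G y i = T i")
          case True
          have "G y = T"
          proof
            fix v show "G y v = T v" using True H by (cases "v = i") auto
          qed
          then show ?thesis using yp by simp
        next
          case False
          have "G y = T(i := \<not> T i)"
          proof
            fix v show "G y v = (T(i := \<not> T i)) v" using False H by (cases "v = i") auto
          qed
          then show ?thesis using yp by simp
        qed
      next
        assume "y \<in> {y \<in> pts I. G y = T} \<union> {y \<in> pts I. G y = T(i := \<not> T i)}"
        then show "y \<in> S" unfolding S_def by auto
      qed
    qed
    have TT: "T \<noteq> T(i := \<not> T i)" by (metis fun_upd_same)
    have disj: "{y \<in> pts I. G y = T} \<inter> {y \<in> pts I. G y = T(i := \<not> T i)} = {}"
      using TT by auto
    have ex: "\<exists>y. y \<in> S \<and> y i = b \<and> (\<forall>y'. y' \<in> S \<and> y' i = b \<longrightarrow> y' = y)" for b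
    proof -
      let ?g = "conjugate (subnet f (I - {i}) (z(i := b)))"
      have bij: "bij_betw ?g (pts (I-{i})) (pts (I-{i}))" using IH[OF i] .
      have "T(i:=False) \<in> pts (I - {i})" using T by (auto simp: pts_def)
      then obtain w where w: "w \<in> pts (I-{i})" "?g w = T(i:=False)" using bij
        by (metis bij_betw_def imageE)
      define y where "y = w(i := b)"
      have wi: "w i = False" using w(1) by (simp add: pts_def)
      have yp: "y \<in> pts I" using w(1) i by (auto simp: pts_def y_def)
      have yw: "y(i:=False) = w" using wi by (auto simp: y_def fun_eq_iff)
      have yib: "y i = b" by (simp add: y_def)
      have yS: "y \<in> S" unfolding S_def
      proof (intro CollectI conjI allI impI yp)
        fix v assume v: "v \<noteq> i"
        have "G y v = ?g w v" using Gr[OF i v, of y] yw yib by simp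
        also have "\<dots> = T v" using w(2) v by simp
        finally show "G y v = T v" .
      qed
      have uniq: "y' = y" if y'S: "y' \<in> S" and y'i: "y' i = b" for y'
      proof -
        have y'p: "y' \<in> pts I" using y'S by (simp add: S_def)
        have p': "y'(i:=False) \<in> pts (I - {i})" using y'p by (auto simp: pts_def)
        have "?g (y'(i:=False)) = T(i:=False)"
        proof
          fix v show "?g (y'(i:=False)) v = (T(i:=False)) v"
          proof (cases "v = i")
            case True
            have "?g (y'(i:=False)) \<in> pts (I-{i})" using G_pts p' by blast
            with True show ?thesis by (auto simp: pts_def)
          next
            case False
            show ?thesis using Gr[OF i False, of y'] y'i y'S False by (simp add: S_def)
          qed
        qed
        then have "y'(i:=False) = w" using w p' bij unfolding bij_betw_def by (metis inj_onD)
        then show ?thesis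
        proof -
          assume e: "y'(i:=False) = w"
          show ?thesis
          proof
            fix v show "y' v = y v" using fun_cong[OF e, of v] fun_cong[OF yw, of v] y'i yib by (cases "v = i") auto
          qed
        qed
      qed
      show ?thesis using yS yib uniq by blast
    qed
    obtain y0 where y0: "y0 \<in> S" "y0 i = False" "\<forall>y'. y' \<in> S \<and> y' i = False \<longrightarrow> y' = y0"
      using ex[of False] by blast
    obtain y1 where y1: "y1 \<in> S" "y1 i = True" "\<forall>y'. y' \<in> S \<and> y' i = True \<longrightarrow> y' = y1"
      using ex[of True] by blast
    have "S = {y0, y1}"
    proof
      show "S \<subseteq> {y0, y1}" using y0(3) y1(3) by blast
    qed (use y0(1) y1(1) in auto)
    moreover have "y0 \<noteq> y1" using y0(2) y1(2) by auto
    ultimately have cS: "card S = 2" by simp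
    have "card S = N T + N (T(i := \<not> T i))" unfolding spl N_def
      by (rule card_Un_disjoint) (use finP disj in auto)
    then show "N T + N (T(i := \<not> T i)) = 2" using cS by simp
  qed
  define N0 where "N0 = N (\<lambda>_. False)"
  obtain i0 where i0: "i0 \<in> I" using ne by blast
  have z0: "(\<lambda>_. False) \<in> pts I" by (simp add: pts_def)
  have N0le: "N0 \<le> 2" using pair[OF z0 i0] unfolding N0_def by simp
  have par: "\<And>T. T \<in> pts I \<Longrightarrow> weight I T = k \<Longrightarrow> N T = (if even k then N0 else 2 - N0)" for k
  proof (induction k)
    case 0
    then have "{v\<in>I. T v} = {}" using fin by (simp add: weight_def)
    then have "T = (\<lambda>_. False)" using 0(1) by (auto simp: pts_def fun_eq_iff)
    then show ?case by (simp add: N0_def)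
  next
    case (Suc k)
    have "{v\<in>I. T v} \<noteq> {}" using Suc.prems(2) unfolding weight_def by (metis card.empty nat.distinct(1))
    then obtain i where i: "i \<in> I" "T i" by blast
    define T' where "T' = T(i:=False)"
    have T'p: "T' \<in> pts I" using Suc.prems(1) by (auto simp: pts_def T'_def)
    have "{v\<in>I. T' v} = {v\<in>I. T v} - {i}" by (auto simp: T'_def)
    then have "weight I T' = k" using Suc.prems(2) i fin by (simp add: weight_def)
    then have ih: "N T' = (if even k then N0 else 2 - N0)" using Suc.IH T'p by blast
    have "T = T'(i := \<not> T' i)" using i by (auto simp: T'_def fun_eq_iff)
    then have "N T' + N T = 2" using pair[OF T'p i(1)] by simp
    then show ?case using ih N0le by auto
  qed
  have par2: "\<And>T. T \<in> pts I \<Longrightarrow> N T = (if even (weight I T) then N0 else 2 - N0)"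
    using par by blast
  have memN: "N (G y) \<ge> 1" if "y \<in> pts I" for y
  proof -
    have "y \<in> {y' \<in> pts I. G y' = G y}" using that by simp
    moreover have "finite {y' \<in> pts I. G y' = G y}" using finP by simp
    ultimately show ?thesis unfolding N_def by (metis (no_types, lifting) card_0_eq empty_iff less_one not_le)
  qed
  have sd: "self_dual I (subnet f I z)" if all2: "\<forall>y\<in>pts I. N (G y) = 2"
    unfolding self_dual_def
  proof
    fix x assume x: "x \<in> pts I"
    define Fx where "Fx = {y \<in> pts I. G y = G x}"
    have cF: "card Fx = 2" using all2 x by (simp add: N_def Fx_def)
    have xF: "x \<in> Fx" using x by (simp add: Fx_def)
    obtain x' where x': "x' \<in> Fx" "x' \<noteq> x"
    proof -
      have "\<not> Fx \<subseteq> {x}"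
      proof
        assume "Fx \<subseteq> {x}"
        then have "card Fx \<le> card {x}" by (intro card_mono) auto
        with cF show False by simp
      qed
      then show ?thesis using that by blast
    qed
    have x'p: "x' \<in> pts I" and eqG: "G x' = G x" using x'(1) by (auto simp: Fx_def)
    have "\<forall>i\<in>I. x i \<noteq> x' i" using coll[OF x x'p] eqG x'(2) by metis
    then have "x' = bxor x (ones I)" using x x'p by (auto simp: pts_def bxor_def ones_def fun_eq_iff)
    then have "G (bxor x (ones I)) = G x" using eqG by simp
    then show "subnet f I z (bxor x (ones I)) = bxor (subnet f I z x) (ones I)"
      unfolding G_def conjugate_def bxor_def fun_eq_iff by metis
  qed
  have "N0 = 0 \<or> N0 = 1 \<or> N0 = 2" using N0le by auto
  moreover have "N0 \<noteq> 2"
  proof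
    assume h: "N0 = 2"
    have A: "\<forall>y\<in>pts I. even (weight I (G y))"
      using memN par2 Gp h by (metis diff_self_eq_0 not_one_le_zero)
    have "\<forall>y\<in>pts I. N (G y) = 2" using A par2 Gp h by simp
    then have "self_dual I (subnet f I z)" by (rule sd)
    moreover have "even_net I (subnet f I z)" unfolding even_net_def
    proof
      show "conjugate (subnet f I z) ` pts I \<subseteq> {x \<in> pts I. even (weight I x)}"
        using A Gp unfolding G_def by auto
      show "{x \<in> pts I. even (weight I x)} \<subseteq> conjugate (subnet f I z) ` pts I"
      proof
        fix T assume "T \<in> {x \<in> pts I. even (weight I x)}"
        then have "N T = 2" "T \<in> pts I" using par2 h by auto
        then have "{y \<in> pts I. G y = T} \<noteq> {}" unfolding N_def by (metis card.empty zero_neq_numeral)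
        then show "T \<in> conjugate (subnet f I z) ` pts I" unfolding G_def by blast
      qed
    qed
    ultimately show False using nb1 by (simp add: even_self_dual_def)
  qed
  moreover have "N0 \<noteq> 0"
  proof
    assume h: "N0 = 0"
    have A: "\<forall>y\<in>pts I. odd (weight I (G y))"
      using memN par2 Gp h by (metis not_one_le_zero)
    have "\<forall>y\<in>pts I. N (G y) = 2" using A par2 Gp h by simp
    then have "self_dual I (subnet f I z)" by (rule sd)
    moreover have "odd_net I (subnet f I z)" unfolding odd_net_def
    proof
      show "conjugate (subnet f I z) ` pts I \<subseteq> {x \<in> pts I. odd (weight I x)}"
        using A Gp unfolding G_def by auto
      show "{x \<in> pts I. odd (weight I x)} \<subseteq> conjugate (subnet f I z) ` pts I"
      proof
        fix T assume "T \<in> {x \<in> pts I. odd (weight I x)}"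
        then have "N T = 2" "T \<in> pts I" using par2 h by auto
        then have "{y \<in> pts I. G y = T} \<noteq> {}" unfolding N_def by (metis card.empty zero_neq_numeral)
        then show "T \<in> conjugate (subnet f I z) ` pts I" unfolding G_def by blast
      qed
    qed
    ultimately show False using nb2 by (simp add: odd_self_dual_def)
  qed
  ultimately have h1: "N0 = 1" by blast
  have inj: "inj_on G (pts I)"
  proof (rule inj_onI)
    fix x x' assume x: "x \<in> pts I" and x': "x' \<in> pts I" and eq: "G x = G x'"
    have "card {y \<in> pts I. G y = G x} = 1" using par2[OF Gp[OF x]] h1 unfolding N_def by simp
    then obtain a where "{y \<in> pts I. G y = G x} = {a}" by (rule card_1_singletonE)
    then have "x \<in> {a}" "x' \<in> {a}" using x x' eq by (metis (mono_tags, lifting) mem_Collect_eq)+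
    then show "x = x'" by simp
  qed
  have "G ` pts I = pts I" using endo_inj_surj[OF finP _ inj] Gp by blast
  then show ?thesis using inj unfolding G_def bij_betw_def by simp
qed

lemma all_bij:
  fixes f :: "('v \<Rightarrow> bool) \<Rightarrow> ('v \<Rightarrow> bool)"
  assumes finV: "finite V"
  and nb: "\<not> (\<exists>I z. I \<noteq> {} \<and> I \<subseteq> V \<and> z \<in> pts (V - I) \<and>
            (even_self_dual I (subnet f I z) \<or> odd_self_dual I (subnet f I z)))"
  shows "\<And>I z. card I = n \<Longrightarrow> I \<subseteq> V \<Longrightarrow> z \<in> pts (V - I) \<Longrightarrow>
     bij_betw (conjugate (subnet f I z)) (pts I) (pts I)"
proof (induction n rule: less_induct)
  case (less n)
  show ?case
  proof (cases "I = {}")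
    case True
    then show ?thesis using G_empty by simp
  next
    case ne: False
    have finI: "finite I" using less.prems(2) finV finite_subset by blast
    show ?thesis
    proof (rule step[OF finI ne])
      fix i b assume i: "i \<in> I"
      have c: "card (I - {i}) < n" using less.prems(1) finI i by (metis card_Diff1_less)
      have s: "I - {i} \<subseteq> V" using less.prems(2) by blast
      have z: "z(i := b) \<in> pts (V - (I - {i}))" using less.prems(2,3) i by (auto simp: pts_def)
      show "bij_betw (conjugate (subnet f (I - {i}) (z(i := b)))) (pts (I - {i})) (pts (I - {i}))"
        using less.IH[OF c refl s z] .
    next
      show "\<not> even_self_dual I (subnet f I z)" using nb ne less.prems by blast
      show "\<not> odd_self_dual I (subnet f I z)" using nb ne less.prems by blast
    qed
  qed
qed

theorem corollary2:
  fixes V :: "'v set" and f :: "('v \<Rightarrow> bool) \<Rightarrow> ('v \<Rightarrow> bool)"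
  assumes "finite V" and "V \<noteq> {}" and "network V f"
  shows "(\<forall>I z. I \<noteq> {} \<and> I \<subseteq> V \<and> z \<in> pts (V - I) \<longrightarrow>
            card {x \<in> pts I. subnet f I z x = x} = 1)
     \<longleftrightarrow> \<not> (\<exists>I z. I \<noteq> {} \<and> I \<subseteq> V \<and> z \<in> pts (V - I) \<and>
            (even_self_dual I (subnet f I z) \<or> odd_self_dual I (subnet f I z)))"
proof
  assume A: "\<forall>I z. I \<noteq> {} \<and> I \<subseteq> V \<and> z \<in> pts (V - I) \<longrightarrow>
            card {x \<in> pts I. subnet f I z x = x} = 1"
  show "\<not> (\<exists>I z. I \<noteq> {} \<and> I \<subseteq> V \<and> z \<in> pts (V - I) \<and>
            (even_self_dual I (subnet f I z) \<or> odd_self_dual I (subnet f I z)))"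
  proof
    assume "\<exists>I z. I \<noteq> {} \<and> I \<subseteq> V \<and> z \<in> pts (V - I) \<and>
            (even_self_dual I (subnet f I z) \<or> odd_self_dual I (subnet f I z))"
    then obtain I z where ne: "I \<noteq> {}" and IV: "I \<subseteq> V" and z: "z \<in> pts (V - I)"
      and bad: "even_self_dual I (subnet f I z) \<or> odd_self_dual I (subnet f I z)" by blast
    define h where "h = subnet f I z"
    define Fix where "Fix = {x \<in> pts I. h x = x}"
    have c1: "card Fix = 1" using A ne IV z by (simp add: Fix_def h_def)
    have finI: "finite I" using IV assms(1) finite_subset by blast
    have finF: "finite Fix" using pts_finite[OF finI] by (simp add: Fix_def)
    have z0: "(\<lambda>_. False) \<in> pts I" by (simp add: pts_def)
    have w0: "weight I (\<lambda>_. False) = 0" by (simp add: weight_def)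
    have fixiff: "h x = x \<longleftrightarrow> conjugate h x = (\<lambda>_. False)" for x
      by (auto simp: conjugate_def bxor_def fun_eq_iff)
    from bad show False
    proof
      assume e: "even_self_dual I (subnet f I z)"
      then have en: "conjugate h ` pts I = {x \<in> pts I. even (weight I x)}" and sd: "self_dual I h"
        by (auto simp: even_self_dual_def even_net_def h_def)
      have "(\<lambda>_. False) \<in> conjugate h ` pts I" using en z0 w0 by simp
      then obtain x where x: "x \<in> pts I" "conjugate h x = (\<lambda>_. False)" by auto
      have hx: "h x = x" using x(2) fixiff by simp
      define x' where "x' = bxor x (ones I)"
      have x'p: "x' \<in> pts I" using x(1) by (auto simp: pts_def x'_def bxor_def ones_def)
      have hx': "h x' = x'" using sd x(1) hx by (simp add: self_dual_def x'_def)
      obtain i where i: "i \<in> I" using ne by blast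
      have "x' i \<noteq> x i" using i by (simp add: x'_def bxor_def ones_def)
      then have "x' \<noteq> x" by auto
      moreover have "{x, x'} \<subseteq> Fix" using x(1) hx x'p hx' by (simp add: Fix_def)
      ultimately have "card {x, x'} \<le> card Fix" "card {x, x'} = 2"
        using card_mono[OF finF] by (blast, simp)
      then show False using c1 by simp
    next
      assume e: "odd_self_dual I (subnet f I z)"
      then have en: "conjugate h ` pts I = {x \<in> pts I. odd (weight I x)}"
        by (auto simp: odd_self_dual_def odd_net_def h_def)
      have "Fix \<noteq> {}" using c1 by auto
      then obtain x where x: "x \<in> pts I" "h x = x" by (auto simp: Fix_def)
      then have "conjugate h x = (\<lambda>_. False)" using fixiff by simp
      then have "(\<lambda>_. False) \<in> conjugate h ` pts I" using x(1) by force
      then show False using en w0 by simp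
    qed
  qed
next
  assume nb: "\<not> (\<exists>I z. I \<noteq> {} \<and> I \<subseteq> V \<and> z \<in> pts (V - I) \<and>
            (even_self_dual I (subnet f I z) \<or> odd_self_dual I (subnet f I z)))"
  show "\<forall>I z. I \<noteq> {} \<and> I \<subseteq> V \<and> z \<in> pts (V - I) \<longrightarrow>
            card {x \<in> pts I. subnet f I z x = x} = 1"
  proof (intro allI impI)
    fix I z assume h: "I \<noteq> {} \<and> I \<subseteq> V \<and> z \<in> pts (V - I)"
    define G where "G = conjugate (subnet f I z)"
    have bij: "bij_betw G (pts I) (pts I)" unfolding G_def
      using all_bij[OF assms(1) nb refl] h by blast
    have z0: "(\<lambda>_. False) \<in> pts I" by (simp add: pts_def)
    then obtain a where a: "a \<in> pts I" "G a = (\<lambda>_. False)" using bij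
      by (metis bij_betw_def imageE)
    have "{x \<in> pts I. subnet f I z x = x} = {a}"
    proof
      show "{a} \<subseteq> {x \<in> pts I. subnet f I z x = x}"
        using a by (auto simp: G_def conjugate_def bxor_def fun_eq_iff)
      show "{x \<in> pts I. subnet f I z x = x} \<subseteq> {a}"
      proof
        fix x assume "x \<in> {x \<in> pts I. subnet f I z x = x}"
        then have x: "x \<in> pts I" "G x = (\<lambda>_. False)"
          by (auto simp: G_def conjugate_def bxor_def fun_eq_iff)
        then show "x \<in> {a}" using a bij unfolding bij_betw_def by (metis inj_onD singletonI)
      qed
    qed
    then show "card {x \<in> pts I. subnet f I z x = x} = 1" by simp
  qed
qed

end
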